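(* Let $n\ge 4$ and $\ell\in\{3,\dots,n-1\}$. For the Grassmannian ${\rm Gr}(3,n)$, there is a sequence of combinatorial mutations taking the polytope $P_{\mathcal{B}_{\ell-1}}$ to $P_{\mathcal{B}_\ell}$.
   Context: For $k=3$: for each $3$-subset $I=\{i_1<i_2<i_3\}$ of $[n]$ a matching field assigns $\sigma=\Lambda(I)\in S_3$; its polytope $P_\Lambda\subset\mathbb{R}^{3\times n}$ is the convex hull of the vectors $\sum_{r=1}^3 e_{\sigma(r),i_r}$ ($e_{i,j}$ the standard basis matrices). For $0\le\ell\le n$, the block diagonal matching field $\mathcal{B}_\ell$ has $\mathcal{B}_\ell(I)=\mathrm{id}$ if $|I\cap\{1,\dots,\ell\}|\ne1$ and $(12)$ otherwise. Combinatorial mutation: with $N\cong\mathbb{Z}^d$, $M$ its dual, $w\in M$ primitive and $F\subset w^\perp\subset N_\mathbb{R}$ a lattice polytope, the tropical map is $\varphi_{w,F}(u)=u-(\min_{f\in F}\langle f,u\rangle)w$; if $P\subset M_\mathbb{R}$ is a lattice polytope containing the origin and $\varphi_{w,F}(P)$ is convex, it is a combinatorial mutation of $P$. A sequence of combinatorial mutations is a finite chain of polytopes in which consecutive polytopes are related, after identification via lattice-preserving affine isomorphisms (unimodular equivalences) of the lattices they span, either by a unimodular equivalence or by a combinatorial mutation. *)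

theory Defs
  imports "HOL-Analysis.Analysis" "HOL-Library.Function_Algebras" "HOL-Combinatorics.Transposition"
begin

text \<open>Vectors are functions nat => real; a vector of R^d is one vanishing outside {..<d}.
  We equip nat => real with its pointwise real vector space structure.\<close>

instantiation "fun" :: (type, real_vector) real_vector
begin
definition scaleR_fun :: "real \<Rightarrow> ('a \<Rightarrow> 'b) \<Rightarrow> 'a \<Rightarrow> 'b" where
  "scaleR_fun c f = (\<lambda>x. c *\<^sub>R f x)"
instance
  by intro_classes (auto simp: scaleR_fun_def fun_eq_iff scaleR_add_right scaleR_add_left)
end

type_synonym rvec = "nat \<Rightarrow> real"

definition in_space :: "nat \<Rightarrow> rvec \<Rightarrow> bool" where
  "in_space d x \<longleftrightarrow> (\<forall>i\<ge>d. x i = 0)"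

definition latt :: "nat \<Rightarrow> rvec set" where
  "latt d = {x. in_space d x \<and> (\<forall>i. x i \<in> \<int>)}"

definition lattice_polytope :: "nat \<Rightarrow> rvec set \<Rightarrow> bool" where
  "lattice_polytope d P \<longleftrightarrow> (\<exists>V. finite V \<and> V \<noteq> {} \<and> V \<subseteq> latt d \<and> P = convex hull V)"

definition pair :: "nat \<Rightarrow> rvec \<Rightarrow> rvec \<Rightarrow> real" where
  "pair d f u = (\<Sum>i<d. f i * u i)"

definition primitive :: "nat \<Rightarrow> rvec \<Rightarrow> bool" where
  "primitive d w \<longleftrightarrow> w \<in> latt d \<and>
     (\<forall>(k::nat) v. v \<in> latt d \<and> w = real k *\<^sub>R v \<longrightarrow> k = 1)"

definition tropical_map :: "nat \<Rightarrow> rvec \<Rightarrow> rvec set \<Rightarrow> rvec \<Rightarrow> rvec" where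
  "tropical_map d w F u = u - (Inf ((\<lambda>f. pair d f u) ` F)) *\<^sub>R w"

definition comb_mutation :: "nat \<Rightarrow> rvec set \<Rightarrow> rvec set \<Rightarrow> bool" where
  "comb_mutation d P Q \<longleftrightarrow> lattice_polytope d P \<and> 0 \<in> P \<and>
     (\<exists>w F. primitive d w \<and> lattice_polytope d F \<and> F \<subseteq> {f. pair d f w = 0} \<and>
            convex (tropical_map d w F ` P) \<and> Q = tropical_map d w F ` P)"

definition spanned_lattice :: "nat \<Rightarrow> rvec set \<Rightarrow> rvec set" where
  "spanned_lattice d P = {x. \<exists>V c. finite V \<and> V \<subseteq> P \<inter> latt d \<and> (\<forall>v\<in>V. c v \<in> \<int>) \<and>
       sum c V = 1 \<and> x = (\<Sum>v\<in>V. c v *\<^sub>R v)}"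

definition unimod_equiv :: "nat \<Rightarrow> rvec set \<Rightarrow> nat \<Rightarrow> rvec set \<Rightarrow> bool" where
  "unimod_equiv d P e Q \<longleftrightarrow> (\<exists>T c. linear T \<and>
      bij_betw (\<lambda>x. T x + c) (spanned_lattice d P) (spanned_lattice e Q) \<and>
      (\<lambda>x. T x + c) ` P = Q)"

text \<open>One step of a sequence of combinatorial mutations; polytopes carry their ambient dimension.\<close>
definition mutation_step :: "nat \<times> rvec set \<Rightarrow> nat \<times> rvec set \<Rightarrow> bool" where
  "mutation_step A B \<longleftrightarrow> (case A of (d, P) \<Rightarrow> case B of (e, Q) \<Rightarrow>
      lattice_polytope d P \<and> lattice_polytope e Q \<and>
      (unimod_equiv d P e Q \<or> (d = e \<and> (comb_mutation d P Q \<or> comb_mutation d Q P))))"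

definition mutation_sequence :: "nat \<times> rvec set \<Rightarrow> nat \<times> rvec set \<Rightarrow> bool" where
  "mutation_sequence A B \<longleftrightarrow> mutation_step\<^sup>*\<^sup>* A B"

text \<open>Coordinate of the matrix unit e_{a,b} (a in {1,2,3}, b in [n]) in R^{3n}.\<close>
definition mat_idx :: "nat \<Rightarrow> nat \<Rightarrow> nat \<Rightarrow> nat" where
  "mat_idx n a b = (a - 1) * n + (b - 1)"

definition mat_unit :: "nat \<Rightarrow> nat \<Rightarrow> nat \<Rightarrow> rvec" where
  "mat_unit n a b = (\<lambda>k. if k = mat_idx n a b then 1 else 0)"

definition three_subsets :: "nat \<Rightarrow> nat set set" where
  "three_subsets n = {I. I \<subseteq> {1..n} \<and> card I = 3}"

definition mf_vertex :: "nat \<Rightarrow> (nat set \<Rightarrow> nat \<Rightarrow> nat) \<Rightarrow> nat set \<Rightarrow> rvec" where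
  "mf_vertex n \<Lambda> I = (\<Sum>r\<in>{1,2,3::nat}. mat_unit n (\<Lambda> I r) (sorted_list_of_set I ! (r - 1)))"

definition matching_field :: "nat \<Rightarrow> (nat set \<Rightarrow> nat \<Rightarrow> nat) \<Rightarrow> bool" where
  "matching_field n \<Lambda> \<longleftrightarrow> (\<forall>I\<in>three_subsets n. \<Lambda> I permutes {1,2,3})"

definition mf_polytope :: "nat \<Rightarrow> (nat set \<Rightarrow> nat \<Rightarrow> nat) \<Rightarrow> rvec set" where
  "mf_polytope n \<Lambda> = convex hull (mf_vertex n \<Lambda> ` three_subsets n)"

definition block_diag :: "nat \<Rightarrow> nat set \<Rightarrow> nat \<Rightarrow> nat" where
  "block_diag l I = (if card (I \<inter> {1..l}) \<noteq> 1 then id else Transposition.transpose (1::nat) 2)"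

end

theory Submission
  imports Defs
begin

lemma convex_lin_eq:
  fixes g :: "'a::real_vector \<Rightarrow> real"
  assumes "linear g" shows "convex {x. g x = c}"
proof (rule convexI)
  fix x y and u v :: real
  assume a: "x \<in> {x. g x = c}" "y \<in> {x. g x = c}" "0 \<le> u" "0 \<le> v" "u + v = 1"
  have "g (u *\<^sub>R x + v *\<^sub>R y) = u * g x + v * g y"
    using assms by (simp add: linear_add linear_scale)
  also have "\<dots> = (u + v) * c" using a by (simp add: distrib_right[symmetric])
  also have "\<dots> = c" using a by simp
  finally show "u *\<^sub>R x + v *\<^sub>R y \<in> {x. g x = c}" using a by simp
qed

lemma convex_lin_le:
  fixes g :: "'a::real_vector \<Rightarrow> real"
  assumes "linear g" shows "convex {x. g x \<le> c}"
proof (rule convexI)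
  fix x y and u v :: real
  assume a: "x \<in> {x. g x \<le> c}" "y \<in> {x. g x \<le> c}" "0 \<le> u" "0 \<le> v" "u + v = 1"
  have "g (u *\<^sub>R x + v *\<^sub>R y) = u * g x + v * g y"
    using assms by (simp add: linear_add linear_scale)
  also have "\<dots> \<le> u * c + v * c"
    using a by (intro add_mono mult_left_mono) auto
  also have "\<dots> = c" using a by (simp add: distrib_right[symmetric])
  finally show "u *\<^sub>R x + v *\<^sub>R y \<in> {x. g x \<le> c}" by simp
qed

lemma convex_lin_ge:
  fixes g :: "'a::real_vector \<Rightarrow> real"
  assumes "linear g" shows "convex {x. c \<le> g x}"
proof (rule convexI)
  fix x y and u v :: real
  assume a: "x \<in> {x. c \<le> g x}" "y \<in> {x. c \<le> g x}" "0 \<le> u" "0 \<le> v" "u + v = 1"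
  have "c = u * c + v * c" using a by (simp add: distrib_right[symmetric])
  also have "\<dots> \<le> u * g x + v * g y"
    using a by (intro add_mono mult_left_mono) auto
  also have "\<dots> = g (u *\<^sub>R x + v *\<^sub>R y)"
    using assms by (simp add: linear_add linear_scale)
  finally show "u *\<^sub>R x + v *\<^sub>R y \<in> {x. c \<le> g x}" by simp
qed


lemma convex3:
  fixes C :: "'a::real_vector set"
  assumes "convex C" "x \<in> C" "y \<in> C" "z \<in> C" "0 \<le> a" "0 \<le> b" "0 \<le> c" "a + b + c = 1"
  shows "a *\<^sub>R x + b *\<^sub>R y + c *\<^sub>R z \<in> C"
proof (cases "a + b = 0")
  case True
  then have "a = 0" "b = 0" using assms by auto
  then show ?thesis using assms by simp
next
  case False
  then have pos: "a + b > 0" using assms by auto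
  define p where "p = (a/(a+b)) *\<^sub>R x + (b/(a+b)) *\<^sub>R y"
  have "a/(a+b) + b/(a+b) = 1" using pos by (simp add: add_divide_distrib[symmetric])
  then have "p \<in> C" unfolding p_def
    using assms pos by (intro convexD) auto
  then have "(a+b) *\<^sub>R p + c *\<^sub>R z \<in> C"
    using assms pos by (intro convexD) auto
  moreover have "(a+b) *\<^sub>R p = a *\<^sub>R x + b *\<^sub>R y"
    using pos by (simp add: p_def scaleR_add_right)
  ultimately show ?thesis by simp
qed

lemma hull_weighted:
  fixes A :: "'a::real_vector set"
  assumes "finite A" "A \<noteq> {}" "\<forall>x\<in>A. 0 \<le> lam x"
  shows "\<exists>s\<in>convex hull A. (\<Sum>x\<in>A. lam x *\<^sub>R x) = sum lam A *\<^sub>R s"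
proof (cases "sum lam A = 0")
  case True
  then have z: "\<forall>x\<in>A. lam x = 0" using assms sum_nonneg_eq_0_iff by blast
  obtain a where "a \<in> A" using assms by auto
  then have "a \<in> convex hull A" using hull_subset[of A convex] by auto
  moreover have "(\<Sum>x\<in>A. lam x *\<^sub>R x) = 0" using z by simp
  ultimately show ?thesis using True by auto
next
  case False
  then have pos: "sum lam A > 0" using assms by (simp add: sum_nonneg order_le_neq_trans)
  define s where "s = (1 / sum lam A) *\<^sub>R (\<Sum>x\<in>A. lam x *\<^sub>R x)"
  have "s \<in> convex hull A"
    unfolding convex_hull_finite[OF assms(1)]
  proof (rule CollectI, rule exI[of _ "\<lambda>x. lam x / sum lam A"], intro conjI)
    show "\<forall>x\<in>A. 0 \<le> lam x / sum lam A" using assms pos by auto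
    show "(\<Sum>x\<in>A. lam x / sum lam A) = 1" using pos by (simp add: sum_divide_distrib[symmetric])
    show "(\<Sum>x\<in>A. (lam x / sum lam A) *\<^sub>R x) = s"
      by (simp add: s_def scaleR_sum_right divide_inverse_commute)
  qed
  moreover have "(\<Sum>x\<in>A. lam x *\<^sub>R x) = sum lam A *\<^sub>R s" using pos by (simp add: s_def)
  ultimately show ?thesis by blast
qed

lemma mid_hull:
  fixes S T Z :: "'a::real_vector set"
  assumes "\<forall>v\<in>S. \<forall>v'\<in>T. (1/2) *\<^sub>R (v + v') \<in> convex hull Z"
    and "\<sigma> \<in> convex hull S" "\<tau> \<in> convex hull T"
  shows "(1/2) *\<^sub>R (\<sigma> + \<tau>) \<in> convex hull Z"
proof -
  have cv: "convex {x. (1/2) *\<^sub>R (x + y) \<in> convex hull Z}" for y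
  proof (rule convexI)
    fix x1 x2 and u v :: real
    assume a: "x1 \<in> {x. (1/2) *\<^sub>R (x + y) \<in> convex hull Z}" "x2 \<in> {x. (1/2) *\<^sub>R (x + y) \<in> convex hull Z}"
      "0 \<le> u" "0 \<le> v" "u + v = 1"
    have "u *\<^sub>R ((1/2) *\<^sub>R (x1 + y)) + v *\<^sub>R ((1/2) *\<^sub>R (x2 + y)) \<in> convex hull Z"
      using a by (intro convexD) auto
    moreover have "u *\<^sub>R ((1/2) *\<^sub>R (x1 + y)) + v *\<^sub>R ((1/2) *\<^sub>R (x2 + y))
        = (1/2) *\<^sub>R ((u *\<^sub>R x1 + v *\<^sub>R x2) + (u + v) *\<^sub>R y)"
      by (simp add: scaleR_add_right scaleR_add_left)
    ultimately show "u *\<^sub>R x1 + v *\<^sub>R x2 \<in> {x. (1/2) *\<^sub>R (x + y) \<in> convex hull Z}"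
      using a by simp
  qed
  have cv2: "convex {y. (1/2) *\<^sub>R (x + y) \<in> convex hull Z}" for x
  proof -
    have "{y. (1/2) *\<^sub>R (x + y) \<in> convex hull Z} = {y. (1/2) *\<^sub>R (y + x) \<in> convex hull Z}"
      by (simp add: add.commute)
    then show ?thesis using cv by simp
  qed
  have "\<forall>v'\<in>T. convex hull S \<subseteq> {x. (1/2) *\<^sub>R (x + v') \<in> convex hull Z}"
    using assms(1) by (intro ballI hull_minimal cv) auto
  then have "convex hull T \<subseteq> {y. (1/2) *\<^sub>R (\<sigma> + y) \<in> convex hull Z}"
    using assms(2) by (intro hull_minimal cv2) auto
  then show ?thesis using assms(3) by auto
qed


lemma core_incl:
  fixes V :: "'a::real_vector set" and g :: "'a \<Rightarrow> real"
  assumes lin: "linear g" and gw: "g w = 0" and fin: "finite V"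
    and vals: "\<forall>v\<in>V. g v = 1 \<or> g v = 0 \<or> g v = -1"
    and Zne: "\<exists>v\<in>V. g v = 0"
    and E: "\<forall>v\<in>V. \<forall>v'\<in>V. g v = 1 \<longrightarrow> g v' = -1 \<longrightarrow> (1/2) *\<^sub>R (v + v') \<in> convex hull {z\<in>V. g z = 0}"
    and u: "u \<in> convex hull V"
  shows "u + max 0 (g u) *\<^sub>R w \<in> convex hull ((\<lambda>v. v + w) ` {v\<in>V. g v = 1} \<union> {v\<in>V. g v \<le> 0})"
proof -
  define S where "S = {v\<in>V. g v = 1}"
  define T where "T = {v\<in>V. g v = -1}"
  define Z where "Z = {v\<in>V. g v = 0}"
  define W where "W = (\<lambda>v. v + w) ` {v\<in>V. g v = 1} \<union> {v\<in>V. g v \<le> 0}"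
  have VU: "V = S \<union> T \<union> Z" using vals by (auto simp: S_def T_def Z_def)
  have finS: "finite S" "finite T" "finite Z" using fin by (auto simp: S_def T_def Z_def)
  have ZW: "convex hull Z \<subseteq> convex hull W" by (rule hull_mono) (auto simp: Z_def W_def)
  have TW: "convex hull T \<subseteq> convex hull W" by (rule hull_mono) (auto simp: T_def W_def)
  have SW: "(\<lambda>x. x + w) ` (convex hull S) \<subseteq> convex hull W"
  proof -
    have "(\<lambda>x. x + w) ` (convex hull S) = convex hull ((\<lambda>x. x + w) ` S)"
      using convex_hull_translation[of w S] by (simp add: add.commute)
    also have "\<dots> \<subseteq> convex hull W" by (rule hull_mono) (auto simp: S_def W_def)
    finally show ?thesis .
  qed
  have hS: "convex hull S \<subseteq> {x. g x = 1}"
    by (rule hull_minimal) (auto simp: S_def intro: convex_lin_eq[OF lin])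
  have hT: "convex hull T \<subseteq> {x. g x = -1}"
    by (rule hull_minimal) (auto simp: T_def intro: convex_lin_eq[OF lin])
  have hZ: "convex hull Z \<subseteq> {x. g x = 0}"
    by (rule hull_minimal) (auto simp: Z_def intro: convex_lin_eq[OF lin])
  show ?thesis
  proof (cases "S = {}")
    case True
    then have "convex hull V \<subseteq> {x. g x \<le> 0}"
      using vals by (intro hull_minimal convex_lin_le[OF lin]) (auto simp: S_def)
    then have "g u \<le> 0" using u by auto
    moreover have "convex hull V \<subseteq> convex hull W"
      using True vals by (intro hull_mono) (auto simp: S_def W_def)
    ultimately show ?thesis using u by (simp add: W_def[symmetric] subsetD)
  next
    case Sne: False
    show ?thesis
    proof (cases "T = {}")
      case True
      then have "convex hull V \<subseteq> {x. 0 \<le> g x}"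
        using vals by (intro hull_minimal convex_lin_ge[OF lin]) (force simp: T_def)
      then have g0: "0 \<le> g u" using u by auto
      define L where "L = (\<lambda>x. x + g x *\<^sub>R w)"
      have linL: "linear L" unfolding L_def
        by (rule linearI) (simp_all add: linear_add[OF lin] linear_scale[OF lin] scaleR_add_left algebra_simps)
      have "L ` V \<subseteq> W"
      proof
        fix y assume "y \<in> L ` V"
        then obtain v where v: "v \<in> V" "y = L v" by auto
        then have "g v = 1 \<or> g v = 0" using vals True by (auto simp: T_def)
        then show "y \<in> W" using v by (auto simp: L_def W_def)
      qed
      then have "L ` (convex hull V) \<subseteq> convex hull W"
        using convex_hull_linear_image[OF linL, of V] hull_mono by metis
      then have "L u \<in> convex hull W" using u by auto
      then show ?thesis using g0 by (simp add: L_def W_def max_def)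
    next
      case Tne: False
      have Zne': "Z \<noteq> {}" using Zne by (auto simp: Z_def)
      obtain lam where lam: "\<forall>x\<in>V. 0 \<le> lam x" "sum lam V = 1" "(\<Sum>x\<in>V. lam x *\<^sub>R x) = u"
        using u unfolding convex_hull_finite[OF fin] by auto
      have disj: "S \<inter> T = {}" "(S \<union> T) \<inter> Z = {}" by (auto simp: S_def T_def Z_def)
      have sumV: "sum f V = sum f S + sum f T + sum f Z" for f :: "'a \<Rightarrow> 'b::comm_monoid_add"
        using finS disj by (simp add: VU sum.union_disjoint)
      obtain \<sigma> where \<sigma>: "\<sigma> \<in> convex hull S" "(\<Sum>x\<in>S. lam x *\<^sub>R x) = sum lam S *\<^sub>R \<sigma>"
        using hull_weighted[OF finS(1) Sne, of lam] lam(1) by (auto simp: S_def)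
      obtain \<tau> where \<tau>: "\<tau> \<in> convex hull T" "(\<Sum>x\<in>T. lam x *\<^sub>R x) = sum lam T *\<^sub>R \<tau>"
        using hull_weighted[OF finS(2) Tne, of lam] lam(1) by (auto simp: T_def)
      obtain \<zeta> where \<zeta>: "\<zeta> \<in> convex hull Z" "(\<Sum>x\<in>Z. lam x *\<^sub>R x) = sum lam Z *\<^sub>R \<zeta>"
        using hull_weighted[OF finS(3) Zne', of lam] lam(1) by (auto simp: Z_def)
      define s where "s = sum lam S"
      define t where "t = sum lam T"
      define z where "z = sum lam Z"
      have nn: "0 \<le> s" "0 \<le> t" "0 \<le> z" using lam(1)
        by (auto simp: s_def t_def z_def S_def T_def Z_def intro: sum_nonneg)
      have s1: "s + t + z = 1" using lam(2) sumV[of lam] by (simp add: s_def t_def z_def)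
      have ueq: "u = s *\<^sub>R \<sigma> + t *\<^sub>R \<tau> + z *\<^sub>R \<zeta>"
        using lam(3) sumV[of "\<lambda>x. lam x *\<^sub>R x"] \<sigma> \<tau> \<zeta> by (simp add: s_def t_def z_def)
      have gs: "g \<sigma> = 1" "g \<tau> = -1" "g \<zeta> = 0" using hS hT hZ \<sigma> \<tau> \<zeta> by auto
      have gu: "g u = s - t"
        using ueq gs lin by (simp add: linear_add linear_scale)
      have mid: "(1/2) *\<^sub>R (\<sigma> + \<tau>) \<in> convex hull Z"
        using mid_hull[OF _ \<sigma>(1) \<tau>(1), of Z] E by (auto simp: S_def T_def Z_def)
      have cW: "convex (convex hull W)" by simp
      show ?thesis
      proof (cases "t \<le> s")
        case True
        have "(s - t) *\<^sub>R (\<sigma> + w) + (2 * t) *\<^sub>R ((1/2) *\<^sub>R (\<sigma> + \<tau>)) + z *\<^sub>R \<zeta> \<in> convex hull W"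
          using True nn s1 SW \<sigma>(1) mid ZW \<zeta>(1)
          by (intro convex3[OF cW]) auto
        moreover have "(s - t) *\<^sub>R (\<sigma> + w) + (2 * t) *\<^sub>R ((1/2) *\<^sub>R (\<sigma> + \<tau>)) + z *\<^sub>R \<zeta>
            = u + max 0 (g u) *\<^sub>R w"
        proof -
          have m: "max 0 (g u) = s - t" using True gu by simp
          show ?thesis unfolding m by (simp add: ueq scaleR_add_right scaleR_diff_left algebra_simps)
        qed
        ultimately show ?thesis by (simp add: W_def)
      next
        case False
        have "(2 * s) *\<^sub>R ((1/2) *\<^sub>R (\<sigma> + \<tau>)) + (t - s) *\<^sub>R \<tau> + z *\<^sub>R \<zeta> \<in> convex hull W"
          using False nn s1 TW \<tau>(1) mid ZW \<zeta>(1)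
          by (intro convex3[OF cW]) auto
        moreover have "(2 * s) *\<^sub>R ((1/2) *\<^sub>R (\<sigma> + \<tau>)) + (t - s) *\<^sub>R \<tau> + z *\<^sub>R \<zeta>
            = u + max 0 (g u) *\<^sub>R w"
        proof -
          have m: "max 0 (g u) = 0" using False gu by simp
          show ?thesis unfolding m by (simp add: ueq scaleR_add_right scaleR_diff_left algebra_simps)
        qed
        ultimately show ?thesis by (simp add: W_def)
      qed
    qed
  qed
qed


lemma core_eq:
  fixes V :: "'a::real_vector set" and g :: "'a \<Rightarrow> real"
  assumes lin: "linear g" and gw: "g w = 0" and fin: "finite V"
    and vals: "\<forall>v\<in>V. g v = 1 \<or> g v = 0 \<or> g v = -1"
    and Zne: "\<exists>v\<in>V. g v = 0"
    and E1: "\<forall>v\<in>V. \<forall>v'\<in>V. g v = 1 \<longrightarrow> g v' = -1 \<longrightarrow> (1/2) *\<^sub>R (v + v') \<in> convex hull {z\<in>V. g z = 0}"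
    and E2: "\<forall>v\<in>V. \<forall>v'\<in>V. g v = 1 \<longrightarrow> g v' = -1 \<longrightarrow> (1/2) *\<^sub>R (v + w + v') \<in> convex hull {z\<in>V. g z = 0}"
    and W: "W = (\<lambda>v. v + w) ` {v\<in>V. g v = 1} \<union> {v\<in>V. g v \<le> 0}"
  shows "(\<lambda>u. u + max 0 (g u) *\<^sub>R w) ` (convex hull V) = convex hull W"
proof
  show "(\<lambda>u. u + max 0 (g u) *\<^sub>R w) ` (convex hull V) \<subseteq> convex hull W"
    using core_incl[OF lin gw fin vals Zne E1] W by auto
next
  have gshift: "g (v + w) = g v" for v using lin gw by (simp add: linear_add)
  have finW: "finite W" using fin W by auto
  have WS: "{x\<in>W. g x = 1} = (\<lambda>v. v + w) ` {v\<in>V. g v = 1}" using W gshift by auto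
  have WZ: "{x\<in>W. g x = 0} = {v\<in>V. g v = 0}" using W gshift by auto
  have WT: "{x\<in>W. g x = -1} = {v\<in>V. g v = -1}" using W gshift by auto
  have WL: "{x\<in>W. g x \<le> 0} = {v\<in>V. g v \<le> 0}" using W gshift by auto
  have valsW: "\<forall>v\<in>W. g v = 1 \<or> g v = 0 \<or> g v = -1" using W vals gshift by auto
  have ZneW: "\<exists>v\<in>W. g v = 0" using WZ Zne by blast
  have gmw: "g (-w) = 0" using lin gw by (simp add: linear_neg)
  have EW: "\<forall>v\<in>W. \<forall>v'\<in>W. g v = 1 \<longrightarrow> g v' = -1 \<longrightarrow> (1/2) *\<^sub>R (v + v') \<in> convex hull {z\<in>W. g z = 0}"
  proof (intro ballI impI)
    fix v v' assume a: "v \<in> W" "v' \<in> W" "g v = 1" "g v' = -1"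
    then obtain v0 where v0: "v0 \<in> V" "g v0 = 1" "v = v0 + w" using WS by blast
    have "v' \<in> V" "g v' = -1" using a WT by auto
    then show "(1/2) *\<^sub>R (v + v') \<in> convex hull {z\<in>W. g z = 0}"
      using E2 v0 WZ by auto
  qed
  have bk: "(\<lambda>v. v + - w) ` {x\<in>W. g x = 1} \<union> {x\<in>W. g x \<le> 0} = V"
  proof -
    have "(\<lambda>v. v + - w) ` {x\<in>W. g x = 1} = {v\<in>V. g v = 1}"
      unfolding WS image_image by simp
    then show ?thesis unfolding WL using vals by auto
  qed
  show "convex hull W \<subseteq> (\<lambda>u. u + max 0 (g u) *\<^sub>R w) ` (convex hull V)"
  proof
    fix x assume x: "x \<in> convex hull W"
    define u where "u = x + max 0 (g x) *\<^sub>R (- w)"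
    have "u \<in> convex hull V"
      using core_incl[OF lin gmw finW valsW ZneW EW x] bk by (simp add: u_def)
    moreover have "g u = g x" unfolding u_def using lin gw by (simp add: linear_diff linear_scale)
    ultimately show "x \<in> (\<lambda>u. u + max 0 (g u) *\<^sub>R w) ` (convex hull V)"
      by (intro image_eqI[of _ _ u]) (auto simp: u_def)
  qed
qed



lemma scaleR_fun_apply [simp]: "(c *\<^sub>R f) x = c *\<^sub>R f x"
  by (simp add: scaleR_fun_def)

lemma sum_fun_apply: "(sum g A) x = (\<Sum>a\<in>A. g a x)" for g :: "'b \<Rightarrow> rvec"
  by (induction A rule: infinite_finite_induct) auto

lemma latt_add: "x \<in> latt d \<Longrightarrow> y \<in> latt d \<Longrightarrow> x + y \<in> latt d"
  by (auto simp: latt_def in_space_def)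
lemma latt_uminus: "x \<in> latt d \<Longrightarrow> - x \<in> latt d"
  by (auto simp: latt_def in_space_def)
lemma latt_diff: "x \<in> latt d \<Longrightarrow> y \<in> latt d \<Longrightarrow> x - y \<in> latt d"
  by (auto simp: latt_def in_space_def)
lemma latt_zero: "0 \<in> latt d"
  by (auto simp: latt_def in_space_def)

lemma pair_add2: "pair d f (x + y) = pair d f x + pair d f y"
  by (simp add: pair_def distrib_left sum.distrib)
lemma pair_scale2: "pair d f (c *\<^sub>R x) = c * pair d f x"
  by (simp add: pair_def sum_distrib_left mult.left_commute)
lemma pair_scale1: "pair d (c *\<^sub>R f) x = c * pair d f x"
  by (simp add: pair_def sum_distrib_left mult.assoc)
lemma pair_add1: "pair d (f + g) x = pair d f x + pair d g x"
  by (simp add: pair_def distrib_right sum.distrib)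

lemma linear_negpair: "linear (\<lambda>u. - pair d f u)"
  by (rule linearI) (simp_all add: pair_add2 pair_scale2)

lemma linear_pair1: "linear (\<lambda>f. pair d f w)"
  by (rule linearI) (simp_all add: pair_add1 pair_scale1)

lemma lattice_polytope_hull:
  "finite V \<Longrightarrow> V \<noteq> {} \<Longrightarrow> V \<subseteq> latt d \<Longrightarrow> lattice_polytope d (convex hull V)"
  unfolding lattice_polytope_def by blast

lemma primitive_one:
  assumes "w \<in> latt d" "w i = 1" shows "primitive d w"
  unfolding primitive_def
proof (intro conjI assms allI impI)
  fix k :: nat and v assume a: "v \<in> latt d \<and> w = real k *\<^sub>R v"
  then have "real k * v i = 1" using assms by (metis scaleR_fun_apply real_scaleR_def)
  moreover have "v i \<in> \<int>" using a by (auto simp: latt_def)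
  then obtain m where m: "v i = of_int m" by (auto elim: Ints_cases)
  ultimately have "int k * m = 1" by (metis of_int_eq_1_iff of_int_mult of_int_of_nat_eq)
  then show "k = 1" by (metis int_ops(2) nat_int nat_mult_eq_1_iff pos_zmult_eq_1_iff zero_less_mult_iff
        zmult_eq_1_iff of_nat_0_le_iff less_le)
qed

lemma spanned_translate_sub:
  assumes c: "c \<in> latt d"
  shows "(\<lambda>x. x + c) ` spanned_lattice d P \<subseteq> spanned_lattice d ((\<lambda>x. x + c) ` P)"
proof
  fix y assume "y \<in> (\<lambda>x. x + c) ` spanned_lattice d P"
  then obtain x where y: "y = x + c" and "x \<in> spanned_lattice d P" by auto
  then obtain V cf where V: "finite V" "V \<subseteq> P \<inter> latt d" "\<forall>v\<in>V. cf v \<in> \<int>" "sum cf V = 1"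
    "x = (\<Sum>v\<in>V. cf v *\<^sub>R v)" unfolding spanned_lattice_def by blast
  define V' where "V' = (\<lambda>v. v + c) ` V"
  define cf' where "cf' = (\<lambda>v'. cf (v' - c))"
  have inj: "inj_on (\<lambda>v. v + c) V" by (auto simp: inj_on_def)
  have "finite V'" using V by (simp add: V'_def)
  moreover have "V' \<subseteq> (\<lambda>x. x + c) ` P \<inter> latt d" using V c by (auto simp: V'_def intro: latt_add)
  moreover have "\<forall>v\<in>V'. cf' v \<in> \<int>" using V by (auto simp: V'_def cf'_def)
  moreover have "sum cf' V' = 1"
    using V by (simp add: V'_def sum.reindex[OF inj] cf'_def comp_def)
  moreover have "y = (\<Sum>v\<in>V'. cf' v *\<^sub>R v)"
  proof -
    have "(\<Sum>v\<in>V'. cf' v *\<^sub>R v) = (\<Sum>v\<in>V. cf v *\<^sub>R (v + c))"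
      by (simp add: V'_def sum.reindex[OF inj] cf'_def comp_def)
    also have "\<dots> = x + (sum cf V) *\<^sub>R c"
      by (simp add: scaleR_add_right sum.distrib V(5) scaleR_sum_left)
    finally show ?thesis using V y by simp
  qed
  ultimately show "y \<in> spanned_lattice d ((\<lambda>x. x + c) ` P)"
    unfolding spanned_lattice_def by blast
qed

lemma unimod_translate:
  assumes c: "c \<in> latt d"
  shows "unimod_equiv d P d ((\<lambda>x. x + c) ` P)"
  unfolding unimod_equiv_def
proof (intro exI conjI)
  show "linear (\<lambda>x. x)" by (rule linear_ident)
  show "(\<lambda>x. x + c) ` P = (\<lambda>x. x + c) ` P" ..
  show "bij_betw (\<lambda>x. x + c) (spanned_lattice d P) (spanned_lattice d ((\<lambda>x. x + c) ` P))"
    unfolding bij_betw_def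
  proof
    show "inj_on (\<lambda>x. x + c) (spanned_lattice d P)" by (auto simp: inj_on_def)
    show "(\<lambda>x. x + c) ` spanned_lattice d P = spanned_lattice d ((\<lambda>x. x + c) ` P)"
    proof
      show "(\<lambda>x. x + c) ` spanned_lattice d P \<subseteq> spanned_lattice d ((\<lambda>x. x + c) ` P)"
        by (rule spanned_translate_sub[OF c])
      show "spanned_lattice d ((\<lambda>x. x + c) ` P) \<subseteq> (\<lambda>x. x + c) ` spanned_lattice d P"
      proof
        fix y assume y: "y \<in> spanned_lattice d ((\<lambda>x. x + c) ` P)"
        have "(\<lambda>x. x + - c) ` ((\<lambda>x. x + c) ` P) = P" by (simp add: image_image)
        then have "y + - c \<in> spanned_lattice d P"
          using spanned_translate_sub[OF latt_uminus[OF c], of "(\<lambda>x. x + c) ` P"] y by auto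
        then show "y \<in> (\<lambda>x. x + c) ` spanned_lattice d P"
          by (intro image_eqI[of _ _ "y + - c"]) auto
      qed
    qed
  qed
qed

lemma hull_translate: "convex hull ((\<lambda>x. x + c) ` S) = (\<lambda>x. x + c) ` (convex hull S)"
  for S :: "'a::real_vector set"
  using convex_hull_translation[of c S] by (simp add: add.commute)

lemma step_translate:
  assumes "finite V" "V \<noteq> {}" "V \<subseteq> latt d" "c \<in> latt d"
  shows "mutation_step (d, convex hull V) (d, convex hull ((\<lambda>x. x + c) ` V))"
  unfolding mutation_step_def
proof (simp, intro conjI disjI1)
  show "lattice_polytope d (convex hull V)" using assms by (intro lattice_polytope_hull)
  show "lattice_polytope d (convex hull ((\<lambda>x. x + c) ` V))"
    using assms by (intro lattice_polytope_hull) (auto intro: latt_add)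
  show "unimod_equiv d (convex hull V) d (convex hull ((\<lambda>x. x + c) ` V))"
    unfolding hull_translate by (rule unimod_translate[OF assms(4)])
qed

lemma inf_segment:
  "Inf ((\<lambda>f'. pair d f' u) ` (convex hull {0, f})) = min 0 (pair d f u)"
proof -
  have "convex hull {0, f} = (\<lambda>t. t *\<^sub>R f) ` {0..1}"
    unfolding segment_convex_hull[symmetric] closed_segment_def by auto
  then have e: "(\<lambda>f'. pair d f' u) ` (convex hull {0, f}) = (\<lambda>t. t * pair d f u) ` {0..1}"
    by (simp add: image_image pair_scale1)
  show ?thesis unfolding e
  proof (rule cInf_eq_minimum)
    show "min 0 (pair d f u) \<in> (\<lambda>t. t * pair d f u) ` {0..1}"
      by (cases "0 \<le> pair d f u") (force simp: min_def)+
    fix x assume "x \<in> (\<lambda>t. t * pair d f u) ` {0..1}"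
    then obtain t where t: "0 \<le> t" "t \<le> 1" "x = t * pair d f u" by auto
    show "min 0 (pair d f u) \<le> x"
    proof (cases "0 \<le> pair d f u")
      case True then show ?thesis using t by simp
    next
      case False
      then have "t * pair d f u \<ge> 1 * pair d f u" using t by (intro mult_right_mono_neg) auto
      then show ?thesis using t False by simp
    qed
  qed
qed

lemma tropical_segment:
  "tropical_map d w (convex hull {0, f}) u = u + max 0 (- pair d f u) *\<^sub>R w"
  unfolding tropical_map_def inf_segment
  by (simp add: min_def max_def)



lemma swap_step:
  fixes V W :: "rvec set" and v0 w f :: rvec and d :: nat
  defines "G \<equiv> (\<lambda>v. pair d f v0 - pair d f v)"
  assumes fin: "finite V" and sub: "V \<subseteq> latt d" and v0: "v0 \<in> V"
    and f: "f \<in> latt d" and fw: "pair d f w = 0" and prim: "primitive d w"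
    and vals: "\<forall>v\<in>V. G v = 1 \<or> G v = 0 \<or> G v = -1"
    and E1: "\<forall>v\<in>V. \<forall>v'\<in>V. G v = 1 \<longrightarrow> G v' = -1 \<longrightarrow> (1/2) *\<^sub>R (v + v') \<in> convex hull {z\<in>V. G z = 0}"
    and E2: "\<forall>v\<in>V. \<forall>v'\<in>V. G v = 1 \<longrightarrow> G v' = -1 \<longrightarrow> (1/2) *\<^sub>R (v + w + v') \<in> convex hull {z\<in>V. G z = 0}"
    and W: "W = (\<lambda>v. v + w) ` {v\<in>V. G v = 1} \<union> {v\<in>V. G v \<le> 0}"
  shows "mutation_sequence (d, convex hull V) (d, convex hull W)"
proof -
  define c where "c = - v0"
  have c: "c \<in> latt d" using v0 sub by (auto simp: c_def intro: latt_uminus)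
  have wl: "w \<in> latt d" using prim by (simp add: primitive_def)
  define tr where "tr = (\<lambda>x::rvec. x + c)"
  define g where "g = (\<lambda>u. - pair d f u)"
  have lin: "linear g" unfolding g_def by (rule linear_negpair)
  have gw: "g w = 0" using fw by (simp add: g_def)
  have gtr: "g (tr v) = G v" for v by (simp add: g_def tr_def G_def c_def pair_def right_diff_distrib sum_subtractf)
  define V' where "V' = tr ` V"
  have finV': "finite V'" using fin by (simp add: V'_def)
  have valsV': "\<forall>v\<in>V'. g v = 1 \<or> g v = 0 \<or> g v = -1" using vals by (auto simp: V'_def gtr)
  have G0: "G v0 = 0" by (simp add: G_def)
  have ZneV': "\<exists>v\<in>V'. g v = 0"
    by (rule bexI[of _ "tr v0"]) (simp_all add: gtr G0 V'_def v0)
  have Zeq: "{z\<in>V'. g z = 0} = tr ` {z\<in>V. G z = 0}" unfolding V'_def by (auto simp: gtr)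
  have trmid: "(1/2) *\<^sub>R (tr a + tr b) = tr ((1/2) *\<^sub>R (a + b))" for a b
  proof -
    have "tr a + tr b = (a + b) + 2 *\<^sub>R c" by (simp add: tr_def scaleR_2 algebra_simps)
    then show ?thesis by (simp add: tr_def scaleR_add_right)
  qed
  have trmid2: "(1/2) *\<^sub>R (tr a + w + tr b) = tr ((1/2) *\<^sub>R (a + w + b))" for a b
    using trmid[of "a + w" b] by (simp add: tr_def add.commute add.left_commute)
  have hull_tr: "convex hull (tr ` A) = tr ` (convex hull A)" for A
    unfolding tr_def by (rule hull_translate)
  have E1': "\<forall>v\<in>V'. \<forall>v'\<in>V'. g v = 1 \<longrightarrow> g v' = -1 \<longrightarrow> (1/2) *\<^sub>R (v + v') \<in> convex hull {z\<in>V'. g z = 0}"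
    unfolding Zeq hull_tr using E1 by (auto simp: V'_def gtr trmid)
  have E2': "\<forall>v\<in>V'. \<forall>v'\<in>V'. g v = 1 \<longrightarrow> g v' = -1 \<longrightarrow> (1/2) *\<^sub>R (v + w + v') \<in> convex hull {z\<in>V'. g z = 0}"
    unfolding Zeq hull_tr using E2 by (auto simp: V'_def gtr trmid2)
  define W' where "W' = (\<lambda>v. v + w) ` {v\<in>V'. g v = 1} \<union> {v\<in>V'. g v \<le> 0}"
  have W'eq: "W' = tr ` W"
  proof -
    have e1: "{v\<in>V'. g v = 1} = tr ` {v\<in>V. G v = 1}" unfolding V'_def by (auto simp: gtr)
    have e2: "(\<lambda>v. v + w) \<circ> tr = tr \<circ> (\<lambda>v. v + w)" by (rule ext) (simp add: tr_def add_ac)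
    have "(\<lambda>v. v + w) ` {v\<in>V'. g v = 1} = tr ` ((\<lambda>v. v + w) ` {v\<in>V. G v = 1})"
      unfolding e1 image_comp e2 ..
    moreover have "{v\<in>V'. g v \<le> 0} = tr ` {v\<in>V. G v \<le> 0}" unfolding V'_def by (auto simp: gtr)
    ultimately show ?thesis by (simp add: W'_def W image_Un)
  qed
  have core: "(\<lambda>u. u + max 0 (g u) *\<^sub>R w) ` (convex hull V') = convex hull W'"
    by (rule core_eq[OF lin gw finV' valsV' ZneV' E1' E2' W'_def])
  define F where "F = convex hull {0, f}"
  have trop: "tropical_map d w F = (\<lambda>u. u + max 0 (g u) *\<^sub>R w)"
    by (rule ext) (simp add: F_def tropical_segment g_def)
  have Vne: "V \<noteq> {}" using v0 by auto
  have Wsub: "W \<subseteq> latt d"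
  proof
    fix x assume "x \<in> W"
    then consider (a) v where "v \<in> V" "x = v + w" | (b) "x \<in> V" unfolding W by blast
    then show "x \<in> latt d"
    proof cases
      case a then show ?thesis using sub wl latt_add by blast
    next
      case b then show ?thesis using sub by blast
    qed
  qed
  have finW: "finite W" unfolding W using fin by simp
  have "v0 \<in> W" unfolding W using v0 G0 by simp
  then have Wne: "W \<noteq> {}" by blast
  have s1: "mutation_step (d, convex hull V) (d, convex hull V')"
    unfolding V'_def tr_def by (rule step_translate[OF fin Vne sub c])
  have s3: "mutation_step (d, convex hull W') (d, convex hull W)"
  proof -
    have "(\<lambda>x. x + - c) ` W' = W" unfolding W'eq by (simp add: image_image tr_def)
    moreover have "finite W'" using finW by (simp add: W'eq)
    moreover have "W' \<noteq> {}" using Wne by (simp add: W'eq)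
    moreover have "W' \<subseteq> latt d" using Wsub c unfolding W'eq tr_def using latt_add by blast
    ultimately show ?thesis using step_translate[of W' d "- c"] latt_uminus[OF c] by simp
  qed
  have V'sub: "V' \<subseteq> latt d" using sub c unfolding V'_def tr_def using latt_add by blast
  have lpV: "lattice_polytope d (convex hull V')"
    using finV' Vne V'sub by (intro lattice_polytope_hull) (auto simp: V'_def)
  have lpW: "lattice_polytope d (convex hull W')"
  proof (rule lattice_polytope_hull)
    show "finite W'" using finW by (simp add: W'eq)
    show "W' \<noteq> {}" using Wne by (simp add: W'eq)
    show "W' \<subseteq> latt d" using Wsub c unfolding W'eq tr_def using latt_add by blast
  qed
  have t0: "tr v0 = 0" by (simp add: tr_def c_def)
  have "tr v0 \<in> V'" unfolding V'_def using v0 by (rule imageI)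
  then have "0 \<in> V'" by (simp only: t0)
  then have zero: "0 \<in> convex hull V'" by (rule hull_inc)
  have lpF: "lattice_polytope d F" unfolding F_def
    using f latt_zero by (intro lattice_polytope_hull) auto
  have Fw: "F \<subseteq> {f. pair d f w = 0}" unfolding F_def
  proof (rule hull_minimal)
    show "{0, f} \<subseteq> {f. pair d f w = 0}" using fw by (simp add: pair_def)
    show "convex {f. pair d f w = 0}" by (rule convex_lin_eq[OF linear_pair1])
  qed
  have img: "tropical_map d w F ` (convex hull V') = convex hull W'" unfolding trop by (rule core)
  have cm: "comb_mutation d (convex hull V') (convex hull W')"
    unfolding comb_mutation_def
    using lpV zero prim lpF Fw img by (metis convex_convex_hull)
  have s2: "mutation_step (d, convex hull V') (d, convex hull W')"
    unfolding mutation_step_def using lpV lpW cm by simp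
  show ?thesis unfolding mutation_sequence_def
    using s1 s2 s3 by (meson rtranclp.rtrancl_into_rtrancl rtranclp.rtrancl_refl)
qed



definition xv :: "nat \<Rightarrow> nat \<Rightarrow> nat \<Rightarrow> nat \<Rightarrow> rvec" where
  "xv n a b c = mat_unit n 1 a + mat_unit n 2 b + mat_unit n 3 c"

definition Vset :: "nat \<Rightarrow> (nat \<Rightarrow> int) \<Rightarrow> rvec set" where
  "Vset n pos = {xv n a b c | a b c. a \<in> {1..n} \<and> b \<in> {1..n} \<and> c \<in> {1..n} \<and> pos a < pos b \<and> a < c \<and> b < c}"

definition fv :: "nat \<Rightarrow> nat set \<Rightarrow> nat set \<Rightarrow> rvec" where
  "fv n A B = (\<lambda>i. if i < n then (if Suc i \<in> A then 1 else 0)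
     else if i < 2 * n then (if Suc (i - n) \<in> B then 1 else 0) else 0)"

lemma idx_lt: "r \<in> {1,2,3} \<Longrightarrow> x \<in> {1..n} \<Longrightarrow> mat_idx n r x < 3 * n"
  by (auto simp: mat_idx_def)

lemma idx_inj: "r \<in> {1,2,3} \<Longrightarrow> r' \<in> {1,2,3} \<Longrightarrow> x \<in> {1..n} \<Longrightarrow> y \<in> {1..n} \<Longrightarrow>
  mat_idx n r x = mat_idx n r' y \<longleftrightarrow> r = r' \<and> x = y"
  by (auto simp: mat_idx_def)

lemma unit_at: "r \<in> {1,2,3} \<Longrightarrow> r' \<in> {1,2,3} \<Longrightarrow> x \<in> {1..n} \<Longrightarrow> y \<in> {1..n} \<Longrightarrow>
  mat_unit n r x (mat_idx n r' y) = (if r = r' \<and> x = y then 1 else 0)"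
  by (auto simp: mat_unit_def idx_inj)

lemma xv_at:
  assumes "a \<in> {1..n}" "b \<in> {1..n}" "c \<in> {1..n}" "x \<in> {1..n}"
  shows "xv n a b c (mat_idx n (Suc 0) x) = (if a = x then 1 else 0)"
    "xv n a b c (mat_idx n 2 x) = (if b = x then 1 else 0)"
    "xv n a b c (mat_idx n 3 x) = (if c = x then 1 else 0)"
  using assms by (simp_all add: xv_def unit_at)

lemma xv_inj:
  assumes "a \<in> {1..n}" "b \<in> {1..n}" "c \<in> {1..n}" "a' \<in> {1..n}" "b' \<in> {1..n}" "c' \<in> {1..n}"
  shows "xv n a b c = xv n a' b' c' \<longleftrightarrow> a = a' \<and> b = b' \<and> c = c'"
proof
  assume e: "xv n a b c = xv n a' b' c'"
  have "xv n a b c (mat_idx n (Suc 0) a) = xv n a' b' c' (mat_idx n (Suc 0) a)"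
       "xv n a b c (mat_idx n 2 b) = xv n a' b' c' (mat_idx n 2 b)"
       "xv n a b c (mat_idx n 3 c) = xv n a' b' c' (mat_idx n 3 c)" using e by simp_all
  then show "a = a' \<and> b = b' \<and> c = c'" using assms by (simp add: xv_at split: if_splits)
qed simp

lemma unit_latt: "r \<in> {1,2,3} \<Longrightarrow> x \<in> {1..n} \<Longrightarrow> mat_unit n r x \<in> latt (3 * n)"
  using idx_lt[of r x n] by (auto simp: latt_def in_space_def mat_unit_def)

lemma xv_latt: "a \<in> {1..n} \<Longrightarrow> b \<in> {1..n} \<Longrightarrow> c \<in> {1..n} \<Longrightarrow> xv n a b c \<in> latt (3 * n)"
  unfolding xv_def by (intro latt_add unit_latt) auto

lemma fv_latt: "fv n A B \<in> latt (3 * n)"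
  by (auto simp: latt_def in_space_def fv_def)

lemma pair_unit: "k < d \<Longrightarrow> pair d f (\<lambda>i. if i = k then 1 else 0) = f k"
  by (simp add: pair_def if_distrib[of "\<lambda>x. f _ * x"] sum.delta' cong: if_cong)

lemma pair_mat_unit: "r \<in> {1,2,3} \<Longrightarrow> x \<in> {1..n} \<Longrightarrow> pair (3 * n) f (mat_unit n r x) = f (mat_idx n r x)"
  unfolding mat_unit_def by (rule pair_unit) (rule idx_lt)

lemma fv_idx:
  assumes "x \<in> {1..n}"
  shows "fv n A B (mat_idx n (Suc 0) x) = (if x \<in> A then 1 else 0)"
    "fv n A B (mat_idx n 2 x) = (if x \<in> B then 1 else 0)"
    "fv n A B (mat_idx n 3 x) = 0"
  using assms by (auto simp: fv_def mat_idx_def)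

lemma pair_xv:
  assumes "a \<in> {1..n}" "b \<in> {1..n}" "c \<in> {1..n}"
  shows "pair (3 * n) (fv n A B) (xv n a b c) = (if a \<in> A then 1 else 0) + (if b \<in> B then 1 else 0)"
  using assms by (simp add: xv_def pair_add2 pair_mat_unit fv_idx)

lemma pair_diff2: "pair d f (x - y) = pair d f x - pair d f y"
  by (simp add: pair_def right_diff_distrib sum_subtractf)

lemma mid_in_hull:
  fixes y y' :: "'a::real_vector"
  shows "y \<in> Z \<Longrightarrow> y' \<in> Z \<Longrightarrow> (1/2) *\<^sub>R (y + y') \<in> convex hull Z"
  using convexD[OF convex_convex_hull[of Z] hull_inc[of y Z] hull_inc[of y' Z], of "1/2" "1/2"]
  by (simp add: scaleR_add_right)

lemma Vset_finite: "finite (Vset n pos)"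
proof -
  have "Vset n pos \<subseteq> (\<lambda>(a,b,c). xv n a b c) ` ({1..n} \<times> {1..n} \<times> {1..n})"
  proof
    fix x assume "x \<in> Vset n pos"
    then obtain a b c where "x = xv n a b c" "a \<in> {1..n}" "b \<in> {1..n}" "c \<in> {1..n}"
      unfolding Vset_def by blast
    then show "x \<in> (\<lambda>(a,b,c). xv n a b c) ` ({1..n} \<times> {1..n} \<times> {1..n})"
      by (intro image_eqI[of _ _ "(a,b,c)"]) auto
  qed
  then show ?thesis by (rule finite_subset) auto
qed

lemma Vset_latt: "Vset n pos \<subseteq> latt (3 * n)"
  by (auto simp: Vset_def intro!: xv_latt)



lemma slist3: "(p::nat) < q \<Longrightarrow> q < r \<Longrightarrow> sorted_list_of_set {p,q,r} = [p,q,r]"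
proof -
  assume a: "p < q" "q < r"
  have "{p,q,r} = set [p,q,r]" by simp
  moreover have "sorted_list_of_set (set [p,q,r]) = [p,q,r]"
    using a by (simp only: sorted_list_of_set_sort_remdups) (simp add: sorted_sort_id)
  ultimately show ?thesis by simp
qed

lemma card_block:
  assumes "1 \<le> p" "p < q" "q < (r::nat)"
  shows "card ({p,q,r} \<inter> {1..K}) = 1 \<longleftrightarrow> p \<le> K \<and> K < q"
proof (cases "p \<le> K \<and> K < q")
  case True
  then have "{p,q,r} \<inter> {1..K} = {p}" using assms by auto
  then show ?thesis using True by simp
next
  case False
  show ?thesis
  proof (cases "K < p")
    case True
    then have "{p,q,r} \<inter> {1..K} = {}" using assms by auto
    then show ?thesis using False by simp
  next
    case False2: False
    then have "q \<le> K" using False by auto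
    then have "{p,q} \<subseteq> {p,q,r} \<inter> {1..K}" using assms by auto
    then have "card {p,q} \<le> card ({p,q,r} \<inter> {1..K})" by (intro card_mono) auto
    then have "2 \<le> card ({p,q,r} \<inter> {1..K})" using assms by simp
    then show ?thesis using False by simp
  qed
qed

lemma mf_vertex_eq:
  assumes "1 \<le> p" "p < q" "q < r"
  shows "mf_vertex n (block_diag K) {p,q,r} = (if p \<le> K \<and> K < q then xv n q p r else xv n p q r)"
proof -
  have sl: "sorted_list_of_set {p,q,r} = [p,q,r]" using assms by (intro slist3)
  have e: "mf_vertex n (block_diag K) {p,q,r} =
      mat_unit n (block_diag K {p,q,r} 1) p + mat_unit n (block_diag K {p,q,r} 2) q
      + mat_unit n (block_diag K {p,q,r} 3) r"
    unfolding mf_vertex_def sl by (simp add: add_ac)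
  show ?thesis
  proof (cases "p \<le> K \<and> K < q")
    case True
    then have "block_diag K {p,q,r} = Transposition.transpose 1 2"
      using card_block[OF assms, of K] by (simp add: block_diag_def)
    then show ?thesis using True e by (simp add: xv_def add_ac)
  next
    case False
    then have "block_diag K {p,q,r} = id"
      using card_block[OF assms, of K] by (simp add: block_diag_def)
    then show ?thesis using False e by (auto simp: xv_def add_ac)
  qed
qed

definition posK :: "nat \<Rightarrow> nat \<Rightarrow> nat \<Rightarrow> int" where
  "posK n K x = (if x \<le> K then int x + int n else int x)"

lemma three_subsets_elem:
  assumes "I \<in> three_subsets n"
  obtains p q r where "I = {p,q,r}" "1 \<le> p" "p < q" "q < r" "r \<le> n"
proof -
  have fin: "finite I" and sub: "I \<subseteq> {1..n}" and c: "card I = 3"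
    using assms by (auto simp: three_subsets_def intro: finite_subset)
  define xs where "xs = sorted_list_of_set I"
  have len: "length xs = 3" using c fin by (simp add: xs_def)
  have st: "sorted_wrt (<) xs" unfolding xs_def by (rule strict_sorted_list_of_set)
  have se: "set xs = I" using fin by (simp add: xs_def)
  have "\<exists>p q r. xs = [p,q,r]" using len by (auto simp: length_Suc_conv numeral_3_eq_3)
  then obtain p q r where "xs = [p,q,r]" by blast
  then show ?thesis using st se sub that by auto
qed

lemma mf_vset: "mf_vertex n (block_diag K) ` three_subsets n = Vset n (posK n K)"
proof (intro equalityI subsetI)
  fix x assume "x \<in> mf_vertex n (block_diag K) ` three_subsets n"
  then obtain I where I: "I \<in> three_subsets n" "x = mf_vertex n (block_diag K) I" by auto
  obtain p q r where pqr: "I = {p,q,r}" "1 \<le> p" "p < q" "q < r" "r \<le> n"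
    using three_subsets_elem[OF I(1)] by blast
  have x: "x = (if p \<le> K \<and> K < q then xv n q p r else xv n p q r)"
    using I(2) pqr mf_vertex_eq[OF pqr(2-4)] by simp
  show "x \<in> Vset n (posK n K)"
  proof (cases "p \<le> K \<and> K < q")
    case True
    then have "posK n K q < posK n K p" using pqr by (simp add: posK_def)
    then show ?thesis using True x pqr unfolding Vset_def
      by (intro CollectI exI[of _ q] exI[of _ p] exI[of _ r]) auto
  next
    case False
    then have "posK n K p < posK n K q" using pqr by (auto simp: posK_def)
    then show ?thesis using False x pqr unfolding Vset_def
      by (intro CollectI exI[of _ p] exI[of _ q] exI[of _ r]) auto
  qed
next
  fix x assume "x \<in> Vset n (posK n K)"
  then obtain a b c where abc: "x = xv n a b c" "a \<in> {1..n}" "b \<in> {1..n}" "c \<in> {1..n}"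
    "posK n K a < posK n K b" "a < c" "b < c" unfolding Vset_def by blast
  have ab: "a \<noteq> b" using abc(5) by auto
  have mem: "{a,b,c} \<in> three_subsets n" using abc ab by (auto simp: three_subsets_def card_insert_if)
  show "x \<in> mf_vertex n (block_diag K) ` three_subsets n"
  proof (cases "a < b")
    case True
    then have "\<not> (a \<le> K \<and> K < b)" using abc by (auto simp: posK_def)
    then have "mf_vertex n (block_diag K) {a,b,c} = x"
      using mf_vertex_eq[of a b c n K] abc True by auto
    then show ?thesis using imageI[OF mem, of "mf_vertex n (block_diag K)"] by simp
  next
    case False
    then have ba: "b < a" using ab by simp
    then have "b \<le> K \<and> K < a" using abc by (auto simp: posK_def split: if_splits)
    moreover have "{a,b,c} = {b,a,c}" by auto
    ultimately have "mf_vertex n (block_diag K) {a,b,c} = x"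
      using mf_vertex_eq[of b a c n K] abc ba by simp
    then show ?thesis using imageI[OF mem, of "mf_vertex n (block_diag K)"] by simp
  qed
qed

lemma Vset_cong:
  assumes "\<And>a b. a \<in> {1..n} \<Longrightarrow> b \<in> {1..n} \<Longrightarrow> pos a < pos b \<longleftrightarrow> pos' a < pos' b"
  shows "Vset n pos = Vset n pos'"
  unfolding Vset_def using assms by blast



lemma swap_step':
  fixes V W :: "rvec set" and v0 w f :: rvec and d :: nat and G :: "rvec \<Rightarrow> real"
  assumes Gd: "G = (\<lambda>v. pair d f v0 - pair d f v)"
    and fin: "finite V" and sub: "V \<subseteq> latt d" and v0: "v0 \<in> V"
    and f: "f \<in> latt d" and fw: "pair d f w = 0" and prim: "primitive d w"
    and vals: "\<forall>v\<in>V. G v = 1 \<or> G v = 0 \<or> G v = -1"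
    and E1: "\<forall>v\<in>V. \<forall>v'\<in>V. G v = 1 \<longrightarrow> G v' = -1 \<longrightarrow> (1/2) *\<^sub>R (v + v') \<in> convex hull {z\<in>V. G z = 0}"
    and E2: "\<forall>v\<in>V. \<forall>v'\<in>V. G v = 1 \<longrightarrow> G v' = -1 \<longrightarrow> (1/2) *\<^sub>R (v + w + v') \<in> convex hull {z\<in>V. G z = 0}"
    and W: "W = (\<lambda>v. v + w) ` {v\<in>V. G v = 1} \<union> {v\<in>V. G v \<le> 0}"
  shows "mutation_sequence (d, convex hull V) (d, convex hull W)"
  using swap_step[OF fin sub v0 f fw prim] vals E1 E2 W unfolding Gd by blast

context
  fixes n L :: nat
  assumes n4: "4 \<le> n" and L3: "3 \<le> L" and Ln: "L \<le> n - 1"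
begin

definition rk :: "nat \<Rightarrow> nat" where "rk x = (if L < x then x - L else x + n - L)"
definition posj :: "nat \<Rightarrow> nat \<Rightarrow> int" where
  "posj j x = (if x = L then 2 * int j + 1 else 2 * int (rk x))"
definition mm :: "nat \<Rightarrow> nat" where "mm j = (if j + 1 \<le> n - L then j + 1 + L else j + 1 + L - n)"
definition AA :: "nat \<Rightarrow> nat set" where "AA j = {x. x \<noteq> L \<and> rk x \<le> j}"
definition BB :: "nat \<Rightarrow> nat set" where "BB j = {x. x \<noteq> L \<and> j + 2 \<le> rk x}"

lemma rk_range: "x \<in> {1..n} \<Longrightarrow> x \<noteq> L \<Longrightarrow> 1 \<le> rk x \<and> rk x \<le> n - 1"
  using Ln L3 by (auto simp: rk_def)

lemma rk_inj: "x \<in> {1..n} \<Longrightarrow> y \<in> {1..n} \<Longrightarrow> x \<noteq> L \<Longrightarrow> y \<noteq> L \<Longrightarrow> rk x = rk y \<Longrightarrow> x = y"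
  using Ln by (auto simp: rk_def split: if_splits)

lemma mm_props: "j < n - 1 \<Longrightarrow> mm j \<in> {1..n} \<and> mm j \<noteq> L \<and> rk (mm j) = j + 1"
  using Ln L3 by (auto simp: mm_def rk_def)

lemma L_range: "L \<in> {1..n}" using L3 Ln by auto

lemma posj_less_iff:
  assumes "x \<in> {1..n}" "y \<in> {1..n}"
  shows "posj j x < posj j y \<longleftrightarrow>
    (x = L \<and> y \<noteq> L \<and> j + 1 \<le> rk y) \<or> (x \<noteq> L \<and> y = L \<and> rk x \<le> j) \<or> (x \<noteq> L \<and> y \<noteq> L \<and> rk x < rk y)"
  by (auto simp: posj_def)

lemma opt1:
  assumes j: "j < n - 1" and a: "a \<in> {1..n}" "a \<in> AA j" and b: "b \<in> {1..n}" "b \<in> BB j"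
    and c: "L < c" "mm j < c" and c': "a < c'" "b < c'"
  shows "(a < c \<and> L < c') \<or> (mm j < c' \<and> b < c)"
  using mm_props[OF j] a b c c' Ln unfolding AA_def BB_def rk_def
  by (auto split: if_splits)

lemma opt2:
  assumes j: "j < n - 1" and a: "a \<in> {1..n}" "a \<in> AA j" and b: "b \<in> {1..n}" "b \<in> BB j"
    and c: "L < c" "mm j < c" and c': "a < c'" "b < c'"
  shows "(b < c \<and> L < c') \<or> (mm j < c' \<and> a < c)"
  using mm_props[OF j] a b c c' Ln unfolding AA_def BB_def rk_def
  by (auto split: if_splits)


lemma memb:
  assumes j: "j < n - 1"
  shows "L \<notin> AA j" "L \<notin> BB j" "mm j \<notin> AA j" "mm j \<notin> BB j"
  using mm_props[OF j] by (auto simp: AA_def BB_def)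

lemma cmp:
  assumes j: "j < n - 1"
  shows "a \<in> {1..n} \<Longrightarrow> a \<in> AA j \<Longrightarrow> posj j a < posj j (mm j)"
    "a \<in> {1..n} \<Longrightarrow> a \<in> AA j \<Longrightarrow> posj j a < posj j L"
    "b \<in> {1..n} \<Longrightarrow> b \<in> BB j \<Longrightarrow> posj j L < posj j b"
    "b \<in> {1..n} \<Longrightarrow> b \<in> BB j \<Longrightarrow> posj j (mm j) < posj j b"
    "posj j L < posj j (mm j)"
  using mm_props[OF j] by (auto simp: AA_def BB_def posj_def)

lemma key1:
  assumes j: "j < n - 1" and ab: "a \<in> {1..n}" "b \<in> {1..n}" and lt: "posj j a < posj j b"
    and na: "a \<notin> AA j" and nb: "b \<notin> BB j"
  shows "a = L \<and> b = mm j"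
proof -
  have m: "mm j \<in> {1..n}" "mm j \<noteq> L" "rk (mm j) = j + 1" using mm_props[OF j] by auto
  have "a = L \<and> b \<noteq> L \<and> rk b = j + 1"
    using lt na nb ab by (auto simp: posj_def AA_def BB_def split: if_splits)
  then show ?thesis using rk_inj[OF ab(2) m(1)] m by auto
qed

lemma order_swap:
  assumes j: "j < n - 1" and xy: "x \<in> {1..n}" "y \<in> {1..n}"
  shows "posj (Suc j) x < posj (Suc j) y \<longleftrightarrow>
    (posj j x < posj j y \<and> \<not> (x = L \<and> y = mm j)) \<or> (x = mm j \<and> y = L)"
proof -
  have m: "mm j \<in> {1..n}" "mm j \<noteq> L" "rk (mm j) = j + 1" using mm_props[OF j] by auto
  have rx: "x \<noteq> L \<Longrightarrow> x \<noteq> mm j \<Longrightarrow> rk x \<noteq> j + 1" using rk_inj[OF xy(1) m(1)] m by auto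
  have ry: "y \<noteq> L \<Longrightarrow> y \<noteq> mm j \<Longrightarrow> rk y \<noteq> j + 1" using rk_inj[OF xy(2) m(1)] m by auto
  show ?thesis using m rx ry by (auto simp: posj_def)
qed


lemma step_j:
  assumes j: "j < n - 1"
  shows "mutation_sequence (3 * n, convex hull (Vset n (posj j))) (3 * n, convex hull (Vset n (posj (Suc j))))"
proof -
  define m where "m = mm j"
  have m: "m \<in> {1..n}" "m \<noteq> L" "rk m = j + 1" using mm_props[OF j] by (auto simp: m_def)
  have mem: "L \<notin> AA j" "L \<notin> BB j" "m \<notin> AA j" "m \<notin> BB j" using memb[OF j] by (auto simp: m_def)
  have Lr: "L \<in> {1..n}" by (rule L_range)
  define f where "f = fv n (AA j) (BB j)"
  define w where "w = mat_unit n 1 m + mat_unit n 2 L - mat_unit n 1 L - mat_unit n 2 m"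
  define v0 where "v0 = xv n 1 2 3"
  define G where "G = (\<lambda>v. pair (3 * n) f v0 - pair (3 * n) f v)"
  have r123: "1 \<in> {1..n}" "2 \<in> {1..n}" "3 \<in> {1..n}" using n4 by auto
  have pv0: "pair (3 * n) f v0 = 1"
  proof -
    have e: "pair (3 * n) f v0 = (if 1 \<in> AA j then 1 else 0) + (if 2 \<in> BB j then 1 else 0)"
      unfolding v0_def f_def by (rule pair_xv[OF r123])
    have "1 \<noteq> L" "2 \<noteq> L" "\<not> L < 1" "\<not> L < 2" using L3 by auto
    then have "rk 1 = 1 + n - L" "rk 2 = 2 + n - L" by (auto simp: rk_def)
    then have "(1 \<in> AA j) \<longleftrightarrow> \<not> (2 \<in> BB j)" using \<open>1 \<noteq> L\<close> \<open>2 \<noteq> L\<close> Ln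
      by (auto simp: AA_def BB_def)
    then show ?thesis unfolding e by auto
  qed
  have Gxv: "G (xv n a b c) = 1 - (if a \<in> AA j then 1 else 0) - (if b \<in> BB j then 1 else 0)"
    if "a \<in> {1..n}" "b \<in> {1..n}" "c \<in> {1..n}" for a b c
  proof -
    have "G (xv n a b c) = 1 - pair (3 * n) f (xv n a b c)" by (simp add: G_def pv0)
    then show ?thesis using that by (simp add: f_def pair_xv)
  qed
  have Vmem: "v \<in> Vset n (posj j) \<longleftrightarrow> (\<exists>a b c. v = xv n a b c \<and> a \<in> {1..n} \<and> b \<in> {1..n} \<and> c \<in> {1..n}
      \<and> posj j a < posj j b \<and> a < c \<and> b < c)" for v
    by (auto simp: Vset_def)
  have xvV: "xv n a b c \<in> Vset n (posj j)"
    if "a \<in> {1..n}" "b \<in> {1..n}" "c \<in> {1..n}" "posj j a < posj j b" "a < c" "b < c" for a b c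
    unfolding Vset_def using that by blast
  have shift: "xv n L m c + w = xv n m L c" for c
    by (simp add: xv_def w_def algebra_simps)
  show ?thesis
  proof (rule swap_step'[OF G_def])
    show "finite (Vset n (posj j))" by (rule Vset_finite)
    show "Vset n (posj j) \<subseteq> latt (3 * n)" by (rule Vset_latt)
    show "v0 \<in> Vset n (posj j)" unfolding v0_def
      using r123 L3 Ln by (intro xvV) (auto simp: posj_def rk_def)
    show "f \<in> latt (3 * n)" unfolding f_def by (rule fv_latt)
    show "pair (3 * n) f w = 0"
      using m Lr mem by (simp add: w_def f_def pair_add2 pair_diff2 pair_mat_unit fv_idx)
    show "primitive (3 * n) w"
    proof (rule primitive_one)
      show "w \<in> latt (3 * n)" unfolding w_def using m Lr
        by (intro latt_diff latt_add unit_latt) auto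
      show "w (mat_idx n 1 m) = 1" using m Lr by (simp add: w_def unit_at)
    qed
    show "\<forall>v\<in>Vset n (posj j). G v = 1 \<or> G v = 0 \<or> G v = -1"
      using Gxv by (auto simp: Vmem split: if_splits)
    show "\<forall>v\<in>Vset n (posj j). \<forall>v'\<in>Vset n (posj j). G v = 1 \<longrightarrow> G v' = -1 \<longrightarrow>
        (1/2) *\<^sub>R (v + v') \<in> convex hull {z \<in> Vset n (posj j). G z = 0}"
    proof (intro ballI impI)
      fix v v' assume v: "v \<in> Vset n (posj j)" and v': "v' \<in> Vset n (posj j)" and g1: "G v = 1" and g2: "G v' = -1"
      obtain a b c where abc: "v = xv n a b c" "a \<in> {1..n}" "b \<in> {1..n}" "c \<in> {1..n}"
        "posj j a < posj j b" "a < c" "b < c" using v by (auto simp: Vmem)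
      obtain a' b' c' where abc': "v' = xv n a' b' c'" "a' \<in> {1..n}" "b' \<in> {1..n}" "c' \<in> {1..n}"
        "posj j a' < posj j b'" "a' < c'" "b' < c'" using v' by (auto simp: Vmem)
      have "a \<notin> AA j" "b \<notin> BB j" using g1 Gxv[OF abc(2-4)] abc(1) by (auto split: if_splits)
      then have ab: "a = L" "b = m" using key1[OF j abc(2,3,5)] by (auto simp: m_def)
      have A': "a' \<in> AA j" "b' \<in> BB j" using g2 Gxv[OF abc'(2-4)] abc'(1) by (auto split: if_splits)
      have Z: "xv n x y z \<in> {z \<in> Vset n (posj j). G z = 0}"
        if "x \<in> {1..n}" "y \<in> {1..n}" "z \<in> {1..n}" "posj j x < posj j y" "x < z" "y < z"
           "(x \<in> AA j \<and> y \<notin> BB j) \<or> (x \<notin> AA j \<and> y \<in> BB j)" for x y z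
        using that xvV Gxv by auto
      have cmps: "posj j a' < posj j m" "posj j L < posj j b'"
        using cmp[OF j] abc'(2,3) A' by (auto simp: m_def)
      have o: "(a' < c \<and> L < c') \<or> (m < c' \<and> b' < c)"
        using opt1[OF j abc'(2) A'(1) abc'(3) A'(2)] abc ab abc' by (auto simp: m_def)
      then show "(1/2) *\<^sub>R (v + v') \<in> convex hull {z \<in> Vset n (posj j). G z = 0}"
      proof
        assume o1: "a' < c \<and> L < c'"
        have "v + v' = xv n a' m c + xv n L b' c'"
          unfolding abc(1) abc'(1) ab by (simp add: xv_def algebra_simps)
        moreover have "xv n a' m c \<in> {z \<in> Vset n (posj j). G z = 0}"
          using Z[of a' m c] abc abc' ab m A' mem cmps o1 by auto
        moreover have "xv n L b' c' \<in> {z \<in> Vset n (posj j). G z = 0}"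
          using Z[of L b' c'] abc abc' ab m A' mem cmps o1 Lr by auto
        ultimately show ?thesis by (simp add: mid_in_hull)
      next
        assume o2: "m < c' \<and> b' < c"
        have "v + v' = xv n a' m c' + xv n L b' c"
          unfolding abc(1) abc'(1) ab by (simp add: xv_def algebra_simps)
        moreover have "xv n a' m c' \<in> {z \<in> Vset n (posj j). G z = 0}"
          using Z[of a' m c'] abc abc' ab m A' mem cmps o2 by auto
        moreover have "xv n L b' c \<in> {z \<in> Vset n (posj j). G z = 0}"
          using Z[of L b' c] abc abc' ab m A' mem cmps o2 Lr by auto
        ultimately show ?thesis by (simp add: mid_in_hull)
      qed
    qed
    show "\<forall>v\<in>Vset n (posj j). \<forall>v'\<in>Vset n (posj j). G v = 1 \<longrightarrow> G v' = -1 \<longrightarrow>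
        (1/2) *\<^sub>R (v + w + v') \<in> convex hull {z \<in> Vset n (posj j). G z = 0}"
    proof (intro ballI impI)
      fix v v' assume v: "v \<in> Vset n (posj j)" and v': "v' \<in> Vset n (posj j)" and g1: "G v = 1" and g2: "G v' = -1"
      obtain a b c where abc: "v = xv n a b c" "a \<in> {1..n}" "b \<in> {1..n}" "c \<in> {1..n}"
        "posj j a < posj j b" "a < c" "b < c" using v by (auto simp: Vmem)
      obtain a' b' c' where abc': "v' = xv n a' b' c'" "a' \<in> {1..n}" "b' \<in> {1..n}" "c' \<in> {1..n}"
        "posj j a' < posj j b'" "a' < c'" "b' < c'" using v' by (auto simp: Vmem)
      have "a \<notin> AA j" "b \<notin> BB j" using g1 Gxv[OF abc(2-4)] abc(1) by (auto split: if_splits)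
      then have ab: "a = L" "b = m" using key1[OF j abc(2,3,5)] by (auto simp: m_def)
      have A': "a' \<in> AA j" "b' \<in> BB j" using g2 Gxv[OF abc'(2-4)] abc'(1) by (auto split: if_splits)
      have Z: "xv n x y z \<in> {z \<in> Vset n (posj j). G z = 0}"
        if "x \<in> {1..n}" "y \<in> {1..n}" "z \<in> {1..n}" "posj j x < posj j y" "x < z" "y < z"
           "(x \<in> AA j \<and> y \<notin> BB j) \<or> (x \<notin> AA j \<and> y \<in> BB j)" for x y z
        using that xvV Gxv by auto
      have cmps: "posj j m < posj j b'" "posj j a' < posj j L"
        using cmp[OF j] abc'(2,3) A' by (auto simp: m_def)
      have vw: "v + w = xv n m L c" unfolding abc(1) ab by (rule shift)
      have o: "(b' < c \<and> L < c') \<or> (m < c' \<and> a' < c)"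
        using opt2[OF j abc'(2) A'(1) abc'(3) A'(2)] abc ab abc' by (auto simp: m_def)
      then show "(1/2) *\<^sub>R (v + w + v') \<in> convex hull {z \<in> Vset n (posj j). G z = 0}"
      proof
        assume o1: "b' < c \<and> L < c'"
        have "v + w + v' = xv n m b' c + xv n a' L c'"
          unfolding vw abc'(1) by (simp add: xv_def algebra_simps)
        moreover have "xv n m b' c \<in> {z \<in> Vset n (posj j). G z = 0}"
          using Z[of m b' c] abc abc' ab m A' mem cmps o1 by auto
        moreover have "xv n a' L c' \<in> {z \<in> Vset n (posj j). G z = 0}"
          using Z[of a' L c'] abc abc' ab m A' mem cmps o1 Lr by auto
        ultimately show ?thesis by (simp add: mid_in_hull)
      next
        assume o2: "m < c' \<and> a' < c"
        have "v + w + v' = xv n m b' c' + xv n a' L c"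
          unfolding vw abc'(1) by (simp add: xv_def algebra_simps)
        moreover have "xv n m b' c' \<in> {z \<in> Vset n (posj j). G z = 0}"
          using Z[of m b' c'] abc abc' ab m A' mem cmps o2 by auto
        moreover have "xv n a' L c \<in> {z \<in> Vset n (posj j). G z = 0}"
          using Z[of a' L c] abc abc' ab m A' mem cmps o2 Lr by auto
        ultimately show ?thesis by (simp add: mid_in_hull)
      qed
    qed
    have G1: "G (xv n L m c) = 1" if "c \<in> {1..n}" for c using Gxv[OF Lr m(1) that] mem by simp
    have swp: "posj (Suc j) a < posj (Suc j) b \<longleftrightarrow>
        (posj j a < posj j b \<and> \<not> (a = L \<and> b = m)) \<or> (a = m \<and> b = L)"
      if "a \<in> {1..n}" "b \<in> {1..n}" for a b using order_swap[OF j that] by (simp add: m_def)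
    have xvV': "xv n a b c \<in> Vset n (posj (Suc j))"
      if "a \<in> {1..n}" "b \<in> {1..n}" "c \<in> {1..n}" "posj (Suc j) a < posj (Suc j) b" "a < c" "b < c" for a b c
      unfolding Vset_def using that by blast
    show "Vset n (posj (Suc j)) = (\<lambda>v. v + w) ` {v \<in> Vset n (posj j). G v = 1} \<union> {v \<in> Vset n (posj j). G v \<le> 0}"
    proof (intro equalityI subsetI)
      fix x assume "x \<in> Vset n (posj (Suc j))"
      then obtain a b c where abc: "x = xv n a b c" "a \<in> {1..n}" "b \<in> {1..n}" "c \<in> {1..n}"
        "posj (Suc j) a < posj (Suc j) b" "a < c" "b < c" unfolding Vset_def by blast
      have "(posj j a < posj j b \<and> \<not> (a = L \<and> b = m)) \<or> (a = m \<and> b = L)"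
        using swp[OF abc(2,3)] abc(5) by simp
      then show "x \<in> (\<lambda>v. v + w) ` {v \<in> Vset n (posj j). G v = 1} \<union> {v \<in> Vset n (posj j). G v \<le> 0}"
      proof
        assume h: "posj j a < posj j b \<and> \<not> (a = L \<and> b = m)"
        have "x \<in> Vset n (posj j)" using abc h xvV by auto
        moreover have "G x \<le> 0"
        proof (rule ccontr)
          assume "\<not> G x \<le> 0"
          then have "a \<notin> AA j" "b \<notin> BB j" using Gxv[OF abc(2-4)] abc(1) by (auto split: if_splits)
          then have "a = L \<and> b = m" using key1[OF j abc(2,3)] h by (simp add: m_def)
          then show False using h by simp
        qed
        ultimately show ?thesis by blast
      next
        assume h: "a = m \<and> b = L"
        have "xv n L m c \<in> Vset n (posj j)" using abc h cmp(5)[OF j] Lr m by (intro xvV) (auto simp: m_def)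
        moreover have "x = xv n L m c + w" using abc(1) h shift by simp
        ultimately show ?thesis using G1[OF abc(4)] by blast
      qed
    next
      fix x assume "x \<in> (\<lambda>v. v + w) ` {v \<in> Vset n (posj j). G v = 1} \<union> {v \<in> Vset n (posj j). G v \<le> 0}"
      then consider (i) v where "v \<in> Vset n (posj j)" "G v = 1" "x = v + w"
        | (ii) "x \<in> Vset n (posj j)" "G x \<le> 0" by blast
      then show "x \<in> Vset n (posj (Suc j))"
      proof cases
        case i
        then obtain a b c where abc: "v = xv n a b c" "a \<in> {1..n}" "b \<in> {1..n}" "c \<in> {1..n}"
          "posj j a < posj j b" "a < c" "b < c" by (auto simp: Vmem)
        have "a \<notin> AA j" "b \<notin> BB j" using i(2) Gxv[OF abc(2-4)] abc(1) by (auto split: if_splits)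
        then have ab: "a = L" "b = m" using key1[OF j abc(2,3,5)] by (auto simp: m_def)
        have "x = xv n m L c" using i(3) abc(1) ab shift by simp
        moreover have "xv n m L c \<in> Vset n (posj (Suc j))"
          using abc ab m Lr swp[OF m(1) Lr] by (intro xvV') auto
        ultimately show ?thesis by simp
      next
        case ii
        then obtain a b c where abc: "x = xv n a b c" "a \<in> {1..n}" "b \<in> {1..n}" "c \<in> {1..n}"
          "posj j a < posj j b" "a < c" "b < c" by (auto simp: Vmem)
        have "\<not> (a = L \<and> b = m)"
        proof
          assume "a = L \<and> b = m"
          then have "G x = 1" using abc(1,4) G1 by simp
          then show False using ii(2) by simp
        qed
        then have "xv n a b c \<in> Vset n (posj (Suc j))" using abc swp[OF abc(2,3)] by (intro xvV') auto
        then show ?thesis using abc(1) by simp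
      qed
    qed
  qed
qed


lemma chain: "j \<le> n - 1 \<Longrightarrow> mutation_sequence (3 * n, convex hull (Vset n (posj 0))) (3 * n, convex hull (Vset n (posj j)))"
proof (induction j)
  case 0
  then show ?case unfolding mutation_sequence_def by simp
next
  case (Suc j)
  then have j: "j < n - 1" by simp
  have "mutation_sequence (3 * n, convex hull (Vset n (posj 0))) (3 * n, convex hull (Vset n (posj j)))"
    using Suc j by simp
  then show ?case using step_j[OF j] unfolding mutation_sequence_def by (rule rtranclp_trans)
qed

lemma start_eq: "Vset n (posj 0) = Vset n (posK n (L - 1))"
  by (rule Vset_cong) (use L3 Ln in \<open>auto simp: posj_def rk_def posK_def\<close>)

lemma finish_eq: "Vset n (posj (n - 1)) = Vset n (posK n L)"
  by (rule Vset_cong) (use L3 Ln in \<open>auto simp: posj_def rk_def posK_def\<close>)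

end

theorem theorem3p6:
  fixes n l :: nat
  assumes "n \<ge> 4" and "3 \<le> l" and "l \<le> n - 1"
  shows "mutation_sequence (3 * n, mf_polytope n (block_diag (l - 1)))
                           (3 * n, mf_polytope n (block_diag l))"
proof -
  have "mutation_sequence (3 * n, convex hull (Vset n (posj n l 0))) (3 * n, convex hull (Vset n (posj n l (n - 1))))"
    using chain[OF assms] by simp
  then show ?thesis
    unfolding mf_polytope_def mf_vset start_eq[OF assms] finish_eq[OF assms] .
qed


end
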